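(* Let $A=op\langle\{F_1=w_1,\dots,F_n=w_n\}\rangle\prec N$ be an aggregate in which $F_1,\dots,F_n$ are atoms, and suppose $A$ is monotone or antimonotone. Then $A_{tr}$ is strongly equivalent to $$\bigwedge_{I\subseteq\{1,\dots,n\}\,:\,op(\{w_i:i\in I\})\not\prec N}\Big(\big(\bigwedge_{i\in I}F_i\big)\to\big(\bigvee_{i\in\{1,\dots,n\}\setminus I}F_i\big)\Big).$$
   Context: Formulas with aggregates: atoms, $\bot$, combinations by $\wedge,\vee,\to$ ($\neg F:=F\to\bot$, $\top:=\bot\to\bot$; empty conjunction $\top$, empty disjunction $\bot$), and aggregates $op\langle\{F_1=w_1,\dots,F_n=w_n\}\rangle\prec N$ with $op$ a function from finite multisets of reals to $\mathbb R\cup\{\pm\infty\}$, $w_i,N$ reals, $\prec$ a binary relation on reals ($\not\prec$ its negation). Reduct: $\bot^X=\bot$; $a^X=a$ if $a\in X$, else $\bot$; $(F\otimes G)^X=F^X\otimes G^X$ if $X\models F\otimes G$, else $\bot$. $X$ is a stable model of a theory $\Gamma$ if $X\models\Gamma^X$ and no proper subset of $X$ satisfies $\Gamma^X$; two formulas are strongly equivalent if adding either to any theory gives the same stable models. The aggregate is monotone if for all sub-multisets $W_1\subseteq W_2\subseteq\{w_1,\dots,w_n\}$, $op(W_1)\prec N$ implies $op(W_2)\prec N$; antimonotone if for all $W_2\subseteq W_1\subseteq\{w_1,\dots,w_n\}$, $op(W_1)\prec N$ implies $op(W_2)\prec N$. Writing $W_I$ for the multiset $\{w_i:i\in I\}$,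 the Pelov–Denecker–Bruynooghe translation is $$A_{tr}=\bigvee_{\substack{I_1\subseteq I_2\subseteq\{1,\dots,n\}:\ op(W_I)\prec N\\ \text{for all } I \text{ with } I_1\subseteq I\subseteq I_2}}\Big(\bigwedge_{i\in I_1}F_i\wedge\bigwedge_{i\in\{1,\dots,n\}\setminus I_2}\neg F_i\Big).$$ *)

theory Defs
  imports Main "HOL-Library.Multiset" "HOL-Library.Extended_Real"
begin

text \<open>An aggregate
  op<{F_1 = w_1, ..., F_n = w_n}> prec N  is represented as
  Agg op [(F_1,w_1),...,(F_n,w_n)] prec N, where op maps finite multisets of
  reals to extended reals and prec is a binary relation (on extended reals,
  so that it can be applied to the values +-infinity of op; N is a real).\<close>

datatype 'a fm =
    Atom 'a
  | Bot
  | Conj "'a fm" "'a fm"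
  | Disj "'a fm" "'a fm"
  | Imp "'a fm" "'a fm"
  | Agg "real multiset \<Rightarrow> ereal" "('a fm \<times> real) list" "ereal \<Rightarrow> ereal \<Rightarrow> bool" real

definition Neg :: "'a fm \<Rightarrow> 'a fm" where "Neg F = Imp F Bot"
definition Top :: "'a fm" where "Top = Imp Bot Bot"

definition BigAnd :: "'a fm list \<Rightarrow> 'a fm" where "BigAnd Fs = foldr Conj Fs Top"
definition BigOr :: "'a fm list \<Rightarrow> 'a fm" where "BigOr Fs = foldr Disj Fs Bot"

fun sat :: "'a set \<Rightarrow> 'a fm \<Rightarrow> bool" where
  "sat X (Atom a) = (a \<in> X)"
| "sat X Bot = False"
| "sat X (Conj F G) = (sat X F \<and> sat X G)"
| "sat X (Disj F G) = (sat X F \<or> sat X G)"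
| "sat X (Imp F G) = (sat X F \<longrightarrow> sat X G)"
| "sat X (Agg op ps r N) =
     r (op (mset (map snd (filter (\<lambda>p. sat X (fst p)) ps)))) (ereal N)"

text \<open>Reduct (Ferraris): connectives and aggregates are replaced by Bot if
  not satisfied by X, otherwise the reduct is applied to the immediate
  subformulas.\<close>
fun reduct :: "'a set \<Rightarrow> 'a fm \<Rightarrow> 'a fm" where
  "reduct X (Atom a) = (if a \<in> X then Atom a else Bot)"
| "reduct X Bot = Bot"
| "reduct X (Conj F G) = (if sat X (Conj F G) then Conj (reduct X F) (reduct X G) else Bot)"
| "reduct X (Disj F G) = (if sat X (Disj F G) then Disj (reduct X F) (reduct X G) else Bot)"
| "reduct X (Imp F G) = (if sat X (Imp F G) then Imp (reduct X F) (reduct X G) else Bot)"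
| "reduct X (Agg op ps r N) =
     (if sat X (Agg op ps r N)
      then Agg op (map (\<lambda>p. (reduct X (fst p), snd p)) ps) r N else Bot)"

definition sat_th :: "'a set \<Rightarrow> 'a fm set \<Rightarrow> bool" where
  "sat_th X \<Gamma> = (\<forall>F\<in>\<Gamma>. sat X F)"

definition stable_model :: "'a set \<Rightarrow> 'a fm set \<Rightarrow> bool" where
  "stable_model X \<Gamma> =
     (sat_th X (reduct X ` \<Gamma>) \<and> (\<forall>Y. Y \<subset> X \<longrightarrow> \<not> sat_th Y (reduct X ` \<Gamma>)))"

definition strongly_equiv :: "'a fm \<Rightarrow> 'a fm \<Rightarrow> bool" where
  "strongly_equiv F G =
     (\<forall>\<Gamma> X. stable_model X (insert F \<Gamma>) = stable_model X (insert G \<Gamma>))"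

definition weights :: "('a fm \<times> real) list \<Rightarrow> nat list \<Rightarrow> real multiset" where
  "weights ps I = mset (map (\<lambda>i. snd (ps ! i)) I)"

definition agg_monotone ::
  "(real multiset \<Rightarrow> ereal) \<Rightarrow> ('a fm \<times> real) list \<Rightarrow> (ereal \<Rightarrow> ereal \<Rightarrow> bool) \<Rightarrow> real \<Rightarrow> bool" where
  "agg_monotone op ps r N =
     (\<forall>W1 W2. W1 \<subseteq># W2 \<longrightarrow> W2 \<subseteq># mset (map snd ps) \<longrightarrow> r (op W1) (ereal N) \<longrightarrow> r (op W2) (ereal N))"

definition agg_antimonotone ::
  "(real multiset \<Rightarrow> ereal) \<Rightarrow> ('a fm \<times> real) list \<Rightarrow> (ereal \<Rightarrow> ereal \<Rightarrow> bool) \<Rightarrow> real \<Rightarrow> bool" where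
  "agg_antimonotone op ps r N =
     (\<forall>W1 W2. W2 \<subseteq># W1 \<longrightarrow> W1 \<subseteq># mset (map snd ps) \<longrightarrow> r (op W1) (ereal N) \<longrightarrow> r (op W2) (ereal N))"

text \<open>Subsets of {0..<n} are enumerated as the (strictly increasing) index lists
  in subseqs [0..<n].\<close>

definition index_subsets :: "nat \<Rightarrow> nat list list" where
  "index_subsets n = subseqs [0..<n]"

definition pdb_tr ::
  "(real multiset \<Rightarrow> ereal) \<Rightarrow> ('a fm \<times> real) list \<Rightarrow> (ereal \<Rightarrow> ereal \<Rightarrow> bool) \<Rightarrow> real \<Rightarrow> 'a fm" where
  "pdb_tr op ps r N =
     (let n = length ps in
      BigOr [ Conj (BigAnd (map (\<lambda>i. fst (ps ! i)) I1))
                   (BigAnd (map (\<lambda>i. Neg (fst (ps ! i))) (filter (\<lambda>i. i \<notin> set I2) [0..<n])))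
            . I1 \<leftarrow> index_subsets n, I2 \<leftarrow> index_subsets n,
              set I1 \<subseteq> set I2 \<and>
              (\<forall>I \<in> set (index_subsets n). set I1 \<subseteq> set I \<and> set I \<subseteq> set I2 \<longrightarrow>
                 r (op (weights ps I)) (ereal N)) ])"

definition agg_impl_form ::
  "(real multiset \<Rightarrow> ereal) \<Rightarrow> ('a fm \<times> real) list \<Rightarrow> (ereal \<Rightarrow> ereal \<Rightarrow> bool) \<Rightarrow> real \<Rightarrow> 'a fm" where
  "agg_impl_form op ps r N =
     (let n = length ps in
      BigAnd [ Imp (BigAnd (map (\<lambda>i. fst (ps ! i)) I))
                   (BigOr (map (\<lambda>i. fst (ps ! i)) (filter (\<lambda>i. i \<notin> set I) [0..<n])))
             . I \<leftarrow> index_subsets n, \<not> r (op (weights ps I)) (ereal N) ])"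

end

theory Submission
  imports Defs
begin

lemma red_sat: "Y \<subseteq> X \<Longrightarrow> sat Y (reduct X F) \<Longrightarrow> sat X F"
  by (cases F) (auto split: if_splits)

lemma red_conj: "Y \<subseteq> X \<Longrightarrow> sat Y (reduct X (Conj F G)) = (sat Y (reduct X F) \<and> sat Y (reduct X G))"
  using red_sat[of Y X F] red_sat[of Y X G] by auto

lemma red_disj: "Y \<subseteq> X \<Longrightarrow> sat Y (reduct X (Disj F G)) = (sat Y (reduct X F) \<or> sat Y (reduct X G))"
  using red_sat[of Y X F] red_sat[of Y X G] by auto

lemma red_imp: "sat Y (reduct X (Imp F G)) = (sat X (Imp F G) \<and> (sat Y (reduct X F) \<longrightarrow> sat Y (reduct X G)))"
  by auto

lemma red_top: "sat Y (reduct X Top)"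
  by (simp add: Top_def)

lemma red_bigand: "Y \<subseteq> X \<Longrightarrow> sat Y (reduct X (BigAnd Fs)) = (\<forall>F\<in>set Fs. sat Y (reduct X F))"
  by (induction Fs) (simp_all add: BigAnd_def red_top red_conj del: reduct.simps)

lemma lc2: "set (concat (map (\<lambda>x. concat (map (\<lambda>y. if P x y then [f x y] else []) ys)) xs))
  = {f x y | x y. x \<in> set xs \<and> y \<in> set ys \<and> P x y}"
  by auto

lemma neq_lem: "A \<subseteq> {..<n} \<Longrightarrow> B \<subseteq> {..<n} \<Longrightarrow>
   (A \<subseteq> B \<longrightarrow> (\<exists>i<n. i \<notin> A \<and> i \<in> B)) = (A \<noteq> B)"
  by blast

lemma lc1: "set (concat (map (\<lambda>x. if P x then [f x] else []) xs))
  = {f x | x. x \<in> set xs \<and> P x}"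
  by auto

lemma se: "(\<And>Y. Y \<subseteq> X \<Longrightarrow> sat Y (reduct X F) = sat Y (reduct X G)) \<Longrightarrow>
  stable_model X (insert F \<Gamma>) = stable_model X (insert G \<Gamma>)"
proof -
  assume h: "\<And>Y. Y \<subseteq> X \<Longrightarrow> sat Y (reduct X F) = sat Y (reduct X G)"
  have e1: "sat X (reduct X F) = sat X (reduct X G)" using h by simp
  have e2: "\<And>Y. Y \<subset> X \<Longrightarrow> sat Y (reduct X F) = sat Y (reduct X G)"
    using h psubset_imp_subset by blast
  have "(\<forall>Y. Y \<subset> X \<longrightarrow> \<not> (sat Y (reduct X F) \<and> (\<forall>H\<in>reduct X ` \<Gamma>. sat Y H))) =
        (\<forall>Y. Y \<subset> X \<longrightarrow> \<not> (sat Y (reduct X G) \<and> (\<forall>H\<in>reduct X ` \<Gamma>. sat Y H)))"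
    using e2 by blast
  then show ?thesis
    unfolding stable_model_def sat_th_def image_insert ball_simps e1 by simp
qed

lemma red_bot: "sat Y (reduct X Bot) = False" by simp

lemma red_bigor: "Y \<subseteq> X \<Longrightarrow> sat Y (reduct X (BigOr Fs)) = (\<exists>F\<in>set Fs. sat Y (reduct X F))"
  by (induction Fs) (simp_all add: BigOr_def red_disj red_bot del: reduct.simps)

lemma sat_bigand: "sat X (BigAnd Fs) = (\<forall>F\<in>set Fs. sat X F)"
  by (induction Fs) (simp_all add: BigAnd_def Top_def)

lemma sat_bigor: "sat X (BigOr Fs) = (\<exists>F\<in>set Fs. sat X F)"
  by (induction Fs) (simp_all add: BigOr_def)

lemma red_neg: "Y \<subseteq> X \<Longrightarrow> sat Y (reduct X (Neg F)) = (\<not> sat X F)"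
  using red_sat[of Y X F] by (auto simp add: Neg_def)

lemma red_atom: "Y \<subseteq> X \<Longrightarrow> fst p = Atom a \<Longrightarrow> sat Y (reduct X (fst p)) = sat Y (fst p)"
  by auto

lemma weights_distinct: "distinct I \<Longrightarrow> weights ps I = image_mset (\<lambda>i. snd (ps ! i)) (mset_set (set I))"
  by (simp only: weights_def mset_map mset_set_set)

lemma mset_ps: "mset (map snd ps) = image_mset (\<lambda>i. snd (ps ! i)) (mset_set {..<length ps})"
proof -
  have "map snd ps = map snd (map ((!) ps) [0..<length ps])" by (simp only: map_nth)
  also have "\<dots> = map (\<lambda>i. snd (ps ! i)) [0..<length ps]" by (simp only: map_map comp_def)
  finally have "mset (map snd ps) = image_mset (\<lambda>i. snd (ps ! i)) (mset [0..<length ps])"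
    by (simp only: mset_map)
  also have "mset [0..<length ps] = mset_set {..<length ps}"
    by (simp only: mset_upt lessThan_atLeast0)
  finally show ?thesis .
qed

lemma subs_props: "I \<in> set (index_subsets n) \<Longrightarrow> distinct I \<and> set I \<subseteq> {..<n}"
proof -
  assume a: "I \<in> set (index_subsets n)"
  hence "set I \<in> set ` set (subseqs [0..<n])" unfolding index_subsets_def by blast
  hence "set I \<subseteq> {0..<n}" unfolding subseqs_powset by simp
  moreover have "distinct I" using a subseqs_distinctD[of I "[0..<n]"] unfolding index_subsets_def by simp
  ultimately show ?thesis by auto
qed

lemma subs_ex: "S \<subseteq> {..<n} \<Longrightarrow> \<exists>I\<in>set (index_subsets n). set I = S"
  unfolding index_subsets_def using subset_subseqs[of S "[0..<n]"] by (auto simp: lessThan_atLeast0)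

theorem proposition18:
  fixes op :: "real multiset \<Rightarrow> ereal"
    and ps :: "('a fm \<times> real) list"
    and prec :: "ereal \<Rightarrow> ereal \<Rightarrow> bool"
    and N :: real
  assumes atoms: "\<forall>p \<in> set ps. \<exists>a. fst p = Atom a"
    and mono: "agg_monotone op ps prec N \<or> agg_antimonotone op ps prec N"
  shows "strongly_equiv (pdb_tr op ps prec N) (agg_impl_form op ps prec N)"
proof -
  define n where "n = length ps"
  define g where "g = (\<lambda>i. snd (ps ! i))"
  define Q where "Q = (\<lambda>S. prec (op (image_mset g (mset_set S))) (ereal N))"
  define subs where "subs = set (index_subsets n)"
  have PQ: "prec (op (weights ps I)) (ereal N) = Q (set I)" if "I \<in> subs" for I
  proof -
    have "distinct I" using subs_props[of I n] that unfolding subs_def by blast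
    show ?thesis unfolding Q_def g_def weights_distinct[OF \<open>distinct I\<close>] by (rule refl)
  qed
  have at: "\<exists>a. fst (ps ! i) = Atom a" if "i < n" for i
    using atoms that n_def by auto
  have Qmono: "Q S1 \<Longrightarrow> Q S2" if "S1 \<subseteq> S2" "S2 \<subseteq> {..<n}"
      "agg_monotone op ps prec N" for S1 S2
  proof -
    have f: "finite S2" using that finite_subset by blast
    have "mset_set S1 \<subseteq># mset_set S2" using that f by (simp add: subset_imp_msubset_mset_set)
    hence "image_mset g (mset_set S1) \<subseteq># image_mset g (mset_set S2)" by (rule image_mset_subseteq_mono)
    moreover have "mset_set S2 \<subseteq># mset_set {..<n}" using that by (simp add: subset_imp_msubset_mset_set)
    hence "image_mset g (mset_set S2) \<subseteq># mset (map snd ps)"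
      unfolding mset_ps g_def n_def by (rule image_mset_subseteq_mono)
    ultimately show "Q S1 \<Longrightarrow> Q S2"
      using that(3) unfolding agg_monotone_def Q_def by blast
  qed
  have Qanti: "Q S2 \<Longrightarrow> Q S1" if "S1 \<subseteq> S2" "S2 \<subseteq> {..<n}"
      "agg_antimonotone op ps prec N" for S1 S2
  proof -
    have f: "finite S2" using that finite_subset by blast
    have "mset_set S1 \<subseteq># mset_set S2" using that f by (simp add: subset_imp_msubset_mset_set)
    hence "image_mset g (mset_set S1) \<subseteq># image_mset g (mset_set S2)" by (rule image_mset_subseteq_mono)
    moreover have "mset_set S2 \<subseteq># mset_set {..<n}" using that by (simp add: subset_imp_msubset_mset_set)
    hence "image_mset g (mset_set S2) \<subseteq># mset (map snd ps)"
      unfolding mset_ps g_def n_def by (rule image_mset_subseteq_mono)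
    ultimately show "Q S2 \<Longrightarrow> Q S1"
      using that(3) unfolding agg_antimonotone_def Q_def by blast
  qed
  have key: "sat Y (reduct X (pdb_tr op ps prec N)) = sat Y (reduct X (agg_impl_form op ps prec N))"
    if YX: "Y \<subseteq> X" for X Y
  proof -
    define TY where "TY = {i. i < n \<and> sat Y (fst (ps ! i))}"
    define TX where "TX = {i. i < n \<and> sat X (fst (ps ! i))}"
    have ra: "sat Y (reduct X (fst (ps ! i))) = (i \<in> TY)" if "i < n" for i
      using at[OF that] YX that by (auto simp: TY_def split: if_splits)
    have sa: "sat X (fst (ps ! i)) = (i \<in> TX)" if "i < n" for i
      using that by (auto simp: TX_def)
    have TYX: "TY \<subseteq> TX" "TX \<subseteq> {..<n}"
    proof -
      show "TY \<subseteq> TX"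
      proof
        fix i assume "i \<in> TY"
        hence i: "i < n" "sat Y (fst (ps ! i))" by (auto simp: TY_def)
        then obtain a where "fst (ps ! i) = Atom a" using at by blast
        thus "i \<in> TX" using i YX by (auto simp: TX_def)
      qed
      show "TX \<subseteq> {..<n}" by (auto simp: TX_def)
    qed
    have L: "sat Y (reduct X (pdb_tr op ps prec N)) =
      (\<exists>I1\<in>subs. \<exists>I2\<in>subs. set I1 \<subseteq> set I2 \<and>
         (\<forall>I\<in>subs. set I1 \<subseteq> set I \<and> set I \<subseteq> set I2 \<longrightarrow> Q (set I)) \<and>
         set I1 \<subseteq> TY \<and> TX \<subseteq> set I2)"
    proof -
      have A: "sat Y (reduct X (BigAnd (map (\<lambda>i. fst (ps ! i)) I1))) = (set I1 \<subseteq> TY)"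
        if "I1 \<in> subs" for I1
      proof -
        have s: "\<forall>i\<in>set I1. i < n" using subs_props[of I1 n] that by (auto simp: subs_def)
        have "(\<forall>i\<in>set I1. sat Y (reduct X (fst (ps!i)))) = (\<forall>i\<in>set I1. i\<in>TY)"
          using ra s by auto
        thus ?thesis by (auto simp add: red_bigand[OF YX])
      qed
      have B: "sat Y (reduct X (BigAnd (map (\<lambda>i. Neg (fst (ps ! i))) (filter (\<lambda>i. i \<notin> set I2) [0..<n]))))
          = (TX \<subseteq> set I2)" if "I2 \<in> subs" for I2
      proof -
        have "(\<forall>i\<in>set (filter (\<lambda>i. i \<notin> set I2) [0..<n]). \<not> sat X (fst (ps!i)))
           = (\<forall>i<n. i \<notin> set I2 \<longrightarrow> i \<notin> TX)"
          using sa by auto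
        moreover have "(\<forall>i<n. i \<notin> set I2 \<longrightarrow> i \<notin> TX) = (TX \<subseteq> set I2)"
          using TYX(2) by auto
        ultimately show ?thesis by (simp add: red_bigand[OF YX] red_neg[OF YX])
      qed
      show ?thesis
        unfolding pdb_tr_def Let_def n_def[symmetric]
        apply (simp only: red_bigor[OF YX] lc2 subs_def[symmetric])
        apply (rule iffI)
        subgoal premises p
        proof -
        from p obtain I1 I2 where h: "I1 \<in> subs" "I2 \<in> subs" "set I1 \<subseteq> set I2"
          "\<forall>I\<in>subs. set I1 \<subseteq> set I \<and> set I \<subseteq> set I2 \<longrightarrow> prec (op (weights ps I)) (ereal N)"
          "sat Y (reduct X (Conj (BigAnd (map (\<lambda>i. fst (ps ! i)) I1))
           (BigAnd (map (\<lambda>i. Neg (fst (ps ! i))) (filter (\<lambda>i. i \<notin> set I2) [0..<n])))))"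
          by blast
        then show ?thesis using A[OF h(1)] B[OF h(2)] PQ red_conj[OF YX] by metis
        qed
        subgoal premises p
        proof -
        from p obtain I1 I2 where h: "I1 \<in> subs" "I2 \<in> subs" "set I1 \<subseteq> set I2"
          "\<forall>I\<in>subs. set I1 \<subseteq> set I \<and> set I \<subseteq> set I2 \<longrightarrow> Q (set I)"
          "set I1 \<subseteq> TY" "TX \<subseteq> set I2" by blast
        have "sat Y (reduct X (Conj (BigAnd (map (\<lambda>i. fst (ps ! i)) I1))
           (BigAnd (map (\<lambda>i. Neg (fst (ps ! i))) (filter (\<lambda>i. i \<notin> set I2) [0..<n])))))"
          using A[OF h(1)] B[OF h(2)] h red_conj[OF YX] by metis
        moreover have "\<forall>I\<in>subs. set I1 \<subseteq> set I \<and> set I \<subseteq> set I2 \<longrightarrow> prec (op (weights ps I)) (ereal N)"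
          using h(4) PQ by simp
        ultimately show ?thesis using h(1-3) by blast
        qed
        done
    qed
    have R: "sat Y (reduct X (agg_impl_form op ps prec N)) =
      (\<forall>I\<in>subs. \<not> Q (set I) \<longrightarrow> set I \<noteq> TX \<and> set I \<noteq> TY)"
    proof -
      have C: "sat Y (reduct X (Imp (BigAnd (map (\<lambda>i. fst (ps ! i)) I))
                   (BigOr (map (\<lambda>i. fst (ps ! i)) (filter (\<lambda>i. i \<notin> set I) [0..<n])))))
             = (set I \<noteq> TX \<and> set I \<noteq> TY)" if "I \<in> subs" for I
      proof -
        have sI: "set I \<subseteq> {..<n}" using subs_props[of I n] that subs_def by auto
        have a1: "sat Y (reduct X (BigAnd (map (\<lambda>i. fst (ps ! i)) I))) = (set I \<subseteq> TY)"
          using sI ra by (auto simp: red_bigand[OF YX])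
        have a2: "sat Y (reduct X (BigOr (map (\<lambda>i. fst (ps ! i)) (filter (\<lambda>i. i \<notin> set I) [0..<n]))))
             = (\<exists>i<n. i \<notin> set I \<and> i \<in> TY)"
          using ra by (auto simp: red_bigor[OF YX])
        have a3: "sat X (BigAnd (map (\<lambda>i. fst (ps ! i)) I)) = (set I \<subseteq> TX)"
          using sI sa by (auto simp: sat_bigand)
        have a4: "sat X (BigOr (map (\<lambda>i. fst (ps ! i)) (filter (\<lambda>i. i \<notin> set I) [0..<n])))
             = (\<exists>i<n. i \<notin> set I \<and> i \<in> TX)"
          using sa by (auto simp: sat_bigor)
        have "TY \<subseteq> {..<n}" using TYX by auto
        then show ?thesis
          unfolding red_imp sat.simps(5) a1 a2 a3 a4 using sI TYX(2) neq_lem by metis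
      qed
      show ?thesis
        unfolding agg_impl_form_def Let_def n_def[symmetric]
        apply (simp only: red_bigand[OF YX] lc1 subs_def[symmetric])
        apply (rule iffI)
        subgoal premises p
        proof (intro ballI impI)
          fix I assume I: "I \<in> subs" "\<not> Q (set I)"
          hence "\<not> prec (op (weights ps I)) (ereal N)" using PQ by simp
          hence "sat Y (reduct X (Imp (BigAnd (map (\<lambda>i. fst (ps ! i)) I))
                   (BigOr (map (\<lambda>i. fst (ps ! i)) (filter (\<lambda>i. i \<notin> set I) [0..<n])))))"
            using p I(1) by blast
          thus "set I \<noteq> TX \<and> set I \<noteq> TY" using C[OF I(1)] by simp
        qed
        subgoal premises p
        proof (intro ballI)
          fix F assume "F \<in> {Imp (BigAnd (map (\<lambda>i. fst (ps ! i)) I))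
                   (BigOr (map (\<lambda>i. fst (ps ! i)) (filter (\<lambda>i. i \<notin> set I) [0..<n]))) | I.
                   I \<in> subs \<and> \<not> prec (op (weights ps I)) (ereal N)}"
          then obtain I where I: "I \<in> subs" "\<not> prec (op (weights ps I)) (ereal N)"
            and F: "F = Imp (BigAnd (map (\<lambda>i. fst (ps ! i)) I))
                   (BigOr (map (\<lambda>i. fst (ps ! i)) (filter (\<lambda>i. i \<notin> set I) [0..<n])))" by blast
          have "\<not> Q (set I)" using I PQ by simp
          hence "set I \<noteq> TX \<and> set I \<noteq> TY" using p I(1) by blast
          thus "sat Y (reduct X F)" using C[OF I(1)] F by simp
        qed
        done
    qed
    have L2: "sat Y (reduct X (pdb_tr op ps prec N)) = (\<forall>S. TY \<subseteq> S \<and> S \<subseteq> TX \<longrightarrow> Q S)"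
    proof
      assume "sat Y (reduct X (pdb_tr op ps prec N))"
      then obtain I1 I2 where "I1\<in>subs" "I2\<in>subs" and
         h: "\<forall>I\<in>subs. set I1 \<subseteq> set I \<and> set I \<subseteq> set I2 \<longrightarrow> Q (set I)"
         "set I1 \<subseteq> TY" "TX \<subseteq> set I2" using L[THEN iffD1] by metis
      show "\<forall>S. TY \<subseteq> S \<and> S \<subseteq> TX \<longrightarrow> Q S"
      proof (intro allI impI)
        fix S assume S: "TY \<subseteq> S \<and> S \<subseteq> TX"
        hence "S \<subseteq> {..<n}" using TYX by blast
        then obtain I where I: "I \<in> subs" "set I = S" using subs_ex[of S n] subs_def by blast
        have "set I1 \<subseteq> set I \<and> set I \<subseteq> set I2" using I S h(2,3) by blast
        then show "Q S" using h(1) I by metis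
      qed
    next
      assume h: "\<forall>S. TY \<subseteq> S \<and> S \<subseteq> TX \<longrightarrow> Q S"
      have "TY \<subseteq> {..<n}" using TYX by blast
      then obtain I1 where I1: "I1 \<in> subs" "set I1 = TY" using subs_ex[of TY n] subs_def by blast
      obtain I2 where I2: "I2 \<in> subs" "set I2 = TX" using subs_ex[of TX n] TYX subs_def by blast
      have "\<forall>I\<in>subs. set I1 \<subseteq> set I \<and> set I \<subseteq> set I2 \<longrightarrow> Q (set I)"
        using h I1 I2 by simp
      then show "sat Y (reduct X (pdb_tr op ps prec N))"
        using L[THEN iffD2] I1 I2 TYX(1) by blast
    qed
    have R2: "sat Y (reduct X (agg_impl_form op ps prec N)) = (Q TX \<and> Q TY)"
    proof -
      have "TY \<subseteq> {..<n}" using TYX by blast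
      then obtain I1 where I1: "I1 \<in> subs" "set I1 = TY" using subs_ex[of TY n] subs_def by blast
      obtain I2 where I2: "I2 \<in> subs" "set I2 = TX" using subs_ex[of TX n] TYX subs_def by blast
      show ?thesis unfolding R
      proof
        assume "\<forall>I\<in>subs. \<not> Q (set I) \<longrightarrow> set I \<noteq> TX \<and> set I \<noteq> TY"
        thus "Q TX \<and> Q TY" using I1 I2 by metis
      qed auto
    qed
    show ?thesis
      unfolding L2 R2
    proof (cases "agg_monotone op ps prec N")
      case True
      show "(\<forall>S. TY \<subseteq> S \<and> S \<subseteq> TX \<longrightarrow> Q S) = (Q TX \<and> Q TY)"
      proof
        assume h: "\<forall>S. TY \<subseteq> S \<and> S \<subseteq> TX \<longrightarrow> Q S"
        show "Q TX \<and> Q TY" using h[rule_format, of TX] h[rule_format, of TY] TYX(1) by simp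
      next
        assume h: "Q TX \<and> Q TY"
        show "\<forall>S. TY \<subseteq> S \<and> S \<subseteq> TX \<longrightarrow> Q S"
        proof (intro allI impI)
          fix S assume S: "TY \<subseteq> S \<and> S \<subseteq> TX"
          hence "S \<subseteq> {..<n}" using TYX(2) by (rule_tac order_trans) auto
          thus "Q S" using Qmono[OF _ _ True, of TY S] S h by simp
        qed
      qed
    next
      case False
      then have an: "agg_antimonotone op ps prec N" using mono by blast
      have "TY \<subseteq> {..<n}" using TYX by blast
      show "(\<forall>S. TY \<subseteq> S \<and> S \<subseteq> TX \<longrightarrow> Q S) = (Q TX \<and> Q TY)"
      proof
        assume h: "\<forall>S. TY \<subseteq> S \<and> S \<subseteq> TX \<longrightarrow> Q S"
        show "Q TX \<and> Q TY" using h[rule_format, of TX] h[rule_format, of TY] TYX(1) by simp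
      next
        assume h: "Q TX \<and> Q TY"
        show "\<forall>S. TY \<subseteq> S \<and> S \<subseteq> TX \<longrightarrow> Q S"
        proof (intro allI impI)
          fix S assume S: "TY \<subseteq> S \<and> S \<subseteq> TX"
          thus "Q S" using Qanti[OF _ _ an, of S TX] TYX(2) h by simp
        qed
      qed
    qed
  qed
  show ?thesis
    unfolding strongly_equiv_def by (intro allI se key)
qed

end
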